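(* Let $D_{\mathrm{jnt}}$ be any distribution of $(\mathsf X,\bar{\mathsf Y},\mathsf Y)$ on $\mathcal X\times\{0,1\}\times\{0,1\}$, let $c,\bar c\in[0,1]$ and $\lambda\in\mathbb R$. Define $s^*(x)=\eta(x)-c-\lambda\,(\eta_{\mathrm{DP}}(x)-\bar c)$ for $x\in\mathcal X$. Then the set of minimisers over measurable $f\colon\mathcal X\to[0,1]$ of $$R_{\mathrm{full}}(f)=\mathrm{CS}(f;D,c)-\lambda\,\mathrm{CS}(f;\bar D_{\mathrm{DP}},\bar c)$$ is exactly the set of $f^*$ such that, for $P_{\mathsf X}$-almost every $x$ with $s^*(x)\neq0$, $f^*(x)=\mathbf 1[s^*(x)>0]$.
   Context: $D$ is the law of $(\mathsf X,\mathsf Y)$ and $\bar D_{\mathrm{DP}}$ the law of $(\mathsf X,\bar{\mathsf Y})$ under $D_{\mathrm{jnt}}$; $P_{\mathsf X}$ is the marginal of $\mathsf X$. $\eta(x)=\Pr(\mathsf Y=1\mid\mathsf X=x)$, $\eta_{\mathrm{DP}}(x)=\Pr(\bar{\mathsf Y}=1\mid \mathsf X=x)$. A randomised classifier $f\colon\mathcal X\to[0,1]$ predicts $1$ on $x$ with probability $f(x)$. For a distribution $E$ of $(\mathsf X,\mathsf Z)$ on $\mathcal X\times\{0,1\}$ with $p=\Pr(\mathsf Z=1)$: $\mathrm{FNR}(f;E)=\mathbb E_{\mathsf X\mid \mathsf Z=1}[1-f(\mathsf X)]$, $\mathrm{FPR}(f;E)=\mathbb E_{\mathsf X\mid\mathsf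 Z=0}[f(\mathsf X)]$, and the cost-sensitive risk is $\mathrm{CS}(f;E,c)=p(1-c)\,\mathrm{FNR}(f;E)+(1-p)c\,\mathrm{FPR}(f;E)$. *)

theory Defs
  imports "HOL-Probability.Probability"
begin

text \<open>A distribution E of (X,Z) on X x {0,1} is a measure on S x bool
  (True encodes label 1).\<close>

definition pos_rate :: "('x \<times> bool) measure \<Rightarrow> real" where
  "pos_rate E = measure E {z \<in> space E. snd z}"

text \<open>FNR(f;E) = E_{X|Z=1}[1 - f X];  FPR(f;E) = E_{X|Z=0}[f X].
  (Conditional expectation as integral over the event divided by its probability;
   when the event is null this gives 0, and it is always multiplied by that probability in CS.)\<close>

definition FNR :: "('x \<Rightarrow> real) \<Rightarrow> ('x \<times> bool) measure \<Rightarrow> real" where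
  "FNR f E = (\<integral>z. (if snd z then 1 - f (fst z) else 0) \<partial>E) / pos_rate E"

definition FPR :: "('x \<Rightarrow> real) \<Rightarrow> ('x \<times> bool) measure \<Rightarrow> real" where
  "FPR f E = (\<integral>z. (if snd z then 0 else f (fst z)) \<partial>E) / (1 - pos_rate E)"

definition CS :: "('x \<Rightarrow> real) \<Rightarrow> ('x \<times> bool) measure \<Rightarrow> real \<Rightarrow> real" where
  "CS f E c = pos_rate E * (1 - c) * FNR f E + (1 - pos_rate E) * c * FPR f E"

definition law_D :: "'x measure \<Rightarrow> ('x \<times> bool \<times> bool) measure \<Rightarrow> ('x \<times> bool) measure" where
  "law_D S M = distr M (S \<Otimes>\<^sub>M count_space UNIV) (\<lambda>\<omega>. (fst \<omega>, snd (snd \<omega>)))"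

definition law_DP :: "'x measure \<Rightarrow> ('x \<times> bool \<times> bool) measure \<Rightarrow> ('x \<times> bool) measure" where
  "law_DP S M = distr M (S \<Otimes>\<^sub>M count_space UNIV) (\<lambda>\<omega>. (fst \<omega>, fst (snd \<omega>)))"

definition marg_X :: "'x measure \<Rightarrow> ('x \<times> bool \<times> bool) measure \<Rightarrow> 'x measure" where
  "marg_X S M = distr M S fst"

text \<open>eta is a (version of the) conditional probability Pr(Z = 1 | X = x) under E:
  a measurable [0,1]-valued function with int_A eta dP_X = Pr(X in A, Z = 1)
  for every measurable A.\<close>

definition is_cond_prob :: "'x measure \<Rightarrow> ('x \<times> bool) measure \<Rightarrow> ('x \<Rightarrow> real) \<Rightarrow> bool" where
  "is_cond_prob S E \<eta> \<longleftrightarrow>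
     \<eta> \<in> borel_measurable S \<and> (\<forall>x\<in>space S. 0 \<le> \<eta> x \<and> \<eta> x \<le> 1) \<and>
     (\<forall>A\<in>sets S. (\<integral>x\<in>A. \<eta> x \<partial>(distr E S fst)) = measure E (A \<times> {True}))"

end

theory Submission
  imports Defs
begin

lemma key:
  fixes S :: "'x measure" and E :: "('x \<times> bool) measure" and \<eta> h :: "'x \<Rightarrow> real"
  assumes E: "finite_measure E" and sE: "sets E = sets (S \<Otimes>\<^sub>M count_space UNIV)"
    and cp: "is_cond_prob S E \<eta>"
    and hm: "h \<in> borel_measurable S" and hb: "\<forall>x\<in>space S. \<bar>h x\<bar> \<le> 1"
  shows "(\<integral>z. (if snd z then h (fst z) else 0) \<partial>E) = (\<integral>x. \<eta> x * h x \<partial>(distr E S fst))"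
proof -
  let ?P = "distr E S fst"
  let ?g = "\<lambda>z::'x\<times>bool. if snd z then 1 else (0::real)"
  have spE: "space E = space S \<times> UNIV"
    using sets_eq_imp_space_eq[OF sE] by (simp add: space_pair_measure)
  have mfst: "fst \<in> E \<rightarrow>\<^sub>M S"
    using measurable_cong_sets[OF sE refl] measurable_fst by blast
  have msnd: "snd \<in> E \<rightarrow>\<^sub>M (count_space UNIV :: bool measure)"
    using measurable_cong_sets[OF sE refl] measurable_snd by blast
  have gm: "?g \<in> borel_measurable E"
  proof -
    have "(\<lambda>b::bool. if b then 1 else (0::real)) \<in> borel_measurable (count_space UNIV)" by simp
    from measurable_comp[OF msnd this] show ?thesis by (simp add: o_def)
  qed
  have \<eta>m: "\<eta> \<in> borel_measurable S" and \<eta>b: "\<forall>x\<in>space S. 0 \<le> \<eta> x \<and> \<eta> x \<le> 1"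
    and \<eta>i: "\<forall>A\<in>sets S. (\<integral>x\<in>A. \<eta> x \<partial>?P) = measure E (A \<times> {True})"
    using cp unfolding is_cond_prob_def by auto
  interpret P: finite_measure ?P using E by (simp add: finite_measure.finite_measure_distr mfst)
  interpret E: finite_measure E by fact
  have eq: "distr (density E ?g) S fst = density ?P \<eta>"
  proof (rule measure_eqI)
    show "sets (distr (density E ?g) S fst) = sets (density ?P \<eta>)" by simp
    fix A assume "A \<in> sets (distr (density E ?g) S fst)"
    hence A: "A \<in> sets S" by simp
    have AT: "A \<times> {True} \<in> sets E" using A sE by simp
    have "emeasure (distr (density E ?g) S fst) A = emeasure (density E ?g) (fst -` A \<inter> space E)"
      using A mfst by (simp add: emeasure_distr)
    also have "\<dots> = (\<integral>\<^sup>+ z. ennreal (?g z) * indicator (fst -` A \<inter> space E) z \<partial>E)"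
      using A mfst gm by (intro emeasure_density) auto
    also have "\<dots> = (\<integral>\<^sup>+ z. indicator (A \<times> {True}) z \<partial>E)"
      by (intro nn_integral_cong) (auto simp: spE indicator_def)
    also have "\<dots> = emeasure E (A \<times> {True})" using AT by simp
    also have "\<dots> = ennreal (measure E (A \<times> {True}))" by (simp add: E.emeasure_eq_measure)
    also have "\<dots> = ennreal (\<integral>x\<in>A. \<eta> x \<partial>?P)" using \<eta>i A by simp
    also have "\<dots> = ennreal (\<integral>x. \<eta> x * indicator A x \<partial>?P)"
      by (simp add: set_lebesgue_integral_def mult.commute)
    also have "\<dots> = (\<integral>\<^sup>+ x. ennreal (\<eta> x * indicator A x) \<partial>?P)"
    proof (rule nn_integral_eq_integral[symmetric])
      show "integrable ?P (\<lambda>x. \<eta> x * indicator A x)"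
        apply (rule P.integrable_const_bound[where B=1])
        using \<eta>b A \<eta>m by (auto simp: indicator_def)
      show "AE x in ?P. 0 \<le> \<eta> x * indicator A x" using \<eta>b by (auto simp: indicator_def)
    qed
    also have "\<dots> = (\<integral>\<^sup>+ x. ennreal (\<eta> x) * indicator A x \<partial>?P)"
      by (intro nn_integral_cong) (auto simp: indicator_def)
    also have "\<dots> = emeasure (density ?P \<eta>) A"
      using A \<eta>m by (intro emeasure_density[symmetric]) auto
    finally show "emeasure (distr (density E ?g) S fst) A = emeasure (density ?P \<eta>) A" .
  qed
  have "(\<integral>z. (if snd z then h (fst z) else 0) \<partial>E) = (\<integral>z. ?g z *\<^sub>R h (fst z) \<partial>E)"
    by (intro Bochner_Integration.integral_cong) auto
  also have "\<dots> = (\<integral>z. h (fst z) \<partial>density E ?g)"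
    using hm mfst gm by (intro integral_density[symmetric]) auto
  also have "\<dots> = (\<integral>x. h x \<partial>distr (density E ?g) S fst)"
    using hm mfst by (intro integral_distr[symmetric]) auto
  also have "\<dots> = (\<integral>x. h x \<partial>density ?P \<eta>)" by (simp add: eq)
  also have "\<dots> = (\<integral>x. \<eta> x *\<^sub>R h x \<partial>?P)"
    using hm \<eta>m \<eta>b by (intro integral_density) auto
  finally show ?thesis by simp
qed

lemma bnd_int:
  fixes E :: "('x \<times> bool) measure" and u :: "'x \<times> bool \<Rightarrow> real"
  assumes E: "finite_measure E" and um: "u \<in> borel_measurable E"
    and ub: "\<forall>z\<in>space E. 0 \<le> u z \<and> u z \<le> 1" and B: "B \<in> sets E"
  shows "0 \<le> (\<integral>z. u z * indicator B z \<partial>E) \<and> (\<integral>z. u z * indicator B z \<partial>E) \<le> measure E B"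
proof -
  interpret E: finite_measure E by fact
  have i1: "integrable E (\<lambda>z. u z * indicator B z)"
    apply (rule E.integrable_const_bound[where B=1]) using ub um B by (auto simp: indicator_def)
  have "(\<integral>z. u z * indicator B z \<partial>E) \<le> (\<integral>z. indicator B z \<partial>E)"
    apply (rule integral_mono[OF i1]) using B ub by (auto simp: indicator_def)
      (rule E.integrable_const_bound[where B=1], auto simp: indicator_def)
  moreover have "0 \<le> (\<integral>z. u z * indicator B z \<partial>E)"
    apply (rule integral_nonneg_AE) using ub by (auto simp: indicator_def)
  ultimately show ?thesis using B by simp
qed

lemma bint:
  fixes P :: "'x measure" and u :: "'x \<Rightarrow> real"
  assumes "finite_measure P" "u \<in> borel_measurable P" "\<forall>x\<in>space P. \<bar>u x\<bar> \<le> B"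
  shows "integrable P u"
  using finite_measure.integrable_const_bound[OF assms(1), of u B] assms by auto

lemma CS_formula:
  fixes S :: "'x measure" and E :: "('x \<times> bool) measure" and \<eta> f :: "'x \<Rightarrow> real"
  assumes E: "prob_space E" and sE: "sets E = sets (S \<Otimes>\<^sub>M count_space UNIV)"
    and cp: "is_cond_prob S E \<eta>"
    and fm: "f \<in> borel_measurable S" and fb: "\<forall>x\<in>space S. 0 \<le> f x \<and> f x \<le> 1"
  shows "CS f E c = (1 - c) * (\<integral>x. \<eta> x \<partial>distr E S fst) - (\<integral>x. f x * (\<eta> x - c) \<partial>distr E S fst)"
proof -
  let ?P = "distr E S fst"
  interpret E: prob_space E by fact
  have spE: "space E = space S \<times> UNIV"
    using sets_eq_imp_space_eq[OF sE] by (simp add: space_pair_measure)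
  have mfst: "fst \<in> E \<rightarrow>\<^sub>M S"
    using measurable_cong_sets[OF sE refl] measurable_fst by blast
  have msnd: "snd \<in> E \<rightarrow>\<^sub>M (count_space UNIV :: bool measure)"
    using measurable_cong_sets[OF sE refl] measurable_snd by blast
  have \<eta>m: "\<eta> \<in> borel_measurable S" and \<eta>b: "\<forall>x\<in>space S. 0 \<le> \<eta> x \<and> \<eta> x \<le> 1"
    using cp unfolding is_cond_prob_def by auto
  interpret P: prob_space ?P by (simp add: E.prob_space_distr mfst)
  have fin: "finite_measure ?P" "finite_measure E" by unfold_locales
  let ?T = "{z \<in> space E. snd z}" and ?F = "{z \<in> space E. \<not> snd z}"
  have T: "?T \<in> sets E" using msnd by measurable
  have F: "?F \<in> sets E" using msnd by measurable
  have fE: "(\<lambda>z. f (fst z)) \<in> borel_measurable E" using fm mfst by measurable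
  define p where "p = pos_rate E"
  have pT: "p = measure E ?T" by (simp add: p_def pos_rate_def)
  have pF: "1 - p = measure E ?F"
  proof -
    have "?F = space E - ?T" by auto
    thus ?thesis using E.prob_compl[OF T] pT by simp
  qed
  define I where "I = (\<integral>z. (if snd z then 1 - f (fst z) else 0) \<partial>E)"
  define J where "J = (\<integral>z. (if snd z then 0 else f (fst z)) \<partial>E)"
  have I': "I = (\<integral>z. (1 - f (fst z)) * indicator ?T z \<partial>E)"
    unfolding I_def by (intro Bochner_Integration.integral_cong) (auto simp: indicator_def)
  have J': "J = (\<integral>z. f (fst z) * indicator ?F z \<partial>E)"
    unfolding J_def by (intro Bochner_Integration.integral_cong) (auto simp: indicator_def)
  have Ib: "0 \<le> I \<and> I \<le> p" unfolding I' pT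
    apply (rule bnd_int[OF fin(2) _ _ T]) using fE fb spE by auto
  have Jb: "0 \<le> J \<and> J \<le> 1 - p" unfolding J' pF
    apply (rule bnd_int[OF fin(2) _ _ F]) using fE fb spE by auto
  have CSeq: "CS f E c = (1 - c) * I + c * J"
  proof -
    have "p * (I / p) = I" using Ib by (cases "p = 0") auto
    moreover have "(1 - p) * (J / (1 - p)) = J" using Jb by (cases "1 - p = 0") auto
    moreover have "CS f E c = (1 - c) * (p * (I / p)) + c * ((1 - p) * (J / (1 - p)))"
      unfolding CS_def FNR_def FPR_def I_def[symmetric] J_def[symmetric] p_def[symmetric]
      by (simp only: mult.assoc mult.commute mult.left_commute)
    ultimately show ?thesis by simp
  qed
  have I2: "I = (\<integral>x. \<eta> x * (1 - f x) \<partial>?P)"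
    unfolding I_def apply (rule key[OF fin(2) sE cp]) using fm fb by auto
  have K2: "(\<integral>z. (if snd z then f (fst z) else 0) \<partial>E) = (\<integral>x. \<eta> x * f x \<partial>?P)"
    apply (rule key[OF fin(2) sE cp]) using fm fb by auto
  have iE1: "integrable E (\<lambda>z. f (fst z))"
    apply (rule bint[OF fin(2) fE, of 1]) using fb spE by auto
  have iE2: "integrable E (\<lambda>z. (if snd z then f (fst z) else 0))"
    apply (rule bint[OF fin(2), of _ 1]) using fb spE fE msnd by auto
  have "J = (\<integral>z. f (fst z) - (if snd z then f (fst z) else 0) \<partial>E)"
    unfolding J_def by (intro Bochner_Integration.integral_cong) auto
  also have "\<dots> = (\<integral>z. f (fst z) \<partial>E) - (\<integral>z. (if snd z then f (fst z) else 0) \<partial>E)"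
    using iE1 iE2 by simp
  also have "(\<integral>z. f (fst z) \<partial>E) = (\<integral>x. f x \<partial>?P)"
    using fm mfst by (simp add: integral_distr)
  finally have J2: "J = (\<integral>x. f x \<partial>?P) - (\<integral>x. \<eta> x * f x \<partial>?P)" using K2 by simp
  have sP: "space ?P = space S" by simp
  have i1: "integrable ?P \<eta>" apply (rule bint[OF fin(1), of _ 1]) using \<eta>m \<eta>b by auto
  have i2: "integrable ?P f" apply (rule bint[OF fin(1), of _ 1]) using fm fb by auto
  have i3: "integrable ?P (\<lambda>x. \<eta> x * f x)" apply (rule bint[OF fin(1), of _ 1])
    using fm fb \<eta>m \<eta>b by (auto simp: abs_mult intro: mult_le_one)
  have I3: "I = (\<integral>x. \<eta> x \<partial>?P) - (\<integral>x. \<eta> x * f x \<partial>?P)"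
    unfolding I2 using i1 i3 by (simp add: right_diff_distrib)
  have R: "(\<integral>x. f x * (\<eta> x - c) \<partial>?P) = (\<integral>x. \<eta> x * f x \<partial>?P) - c * (\<integral>x. f x \<partial>?P)"
  proof -
    have "(\<integral>x. f x * (\<eta> x - c) \<partial>?P) = (\<integral>x. \<eta> x * f x - c * f x \<partial>?P)"
      by (simp add: algebra_simps)
    also have "\<dots> = (\<integral>x. \<eta> x * f x \<partial>?P) - c * (\<integral>x. f x \<partial>?P)"
      using i2 i3 by simp
    finally show ?thesis .
  qed
  show ?thesis unfolding CSeq I3 J2 R by (simp add: algebra_simps)
qed


theorem proposition1:
  fixes S :: "'x measure" and M :: "('x \<times> bool \<times> bool) measure"
    and \<eta> \<eta>DP :: "'x \<Rightarrow> real" and c cbar lam :: real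
  assumes "prob_space M"
    and "sets M = sets (S \<Otimes>\<^sub>M (count_space UNIV \<Otimes>\<^sub>M count_space UNIV))"
    and "c \<in> {0..1}" and "cbar \<in> {0..1}"
    and "is_cond_prob S (law_D S M) \<eta>"
    and "is_cond_prob S (law_DP S M) \<eta>DP"
  shows "{f. f \<in> borel_measurable S \<and> (\<forall>x\<in>space S. 0 \<le> f x \<and> f x \<le> 1) \<and>
            (\<forall>g. g \<in> borel_measurable S \<and> (\<forall>x\<in>space S. 0 \<le> g x \<and> g x \<le> 1) \<longrightarrow>
               CS f (law_D S M) c - lam * CS f (law_DP S M) cbar
                 \<le> CS g (law_D S M) c - lam * CS g (law_DP S M) cbar)}
       = {f. f \<in> borel_measurable S \<and> (\<forall>x\<in>space S. 0 \<le> f x \<and> f x \<le> 1) \<and>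
            (AE x in marg_X S M.
               \<eta> x - c - lam * (\<eta>DP x - cbar) \<noteq> 0 \<longrightarrow>
               f x = (if \<eta> x - c - lam * (\<eta>DP x - cbar) > 0 then 1 else 0))}"
proof -
  interpret M: prob_space M by fact
  let ?P = "marg_X S M"
  define s where "s x = \<eta> x - c - lam * (\<eta>DP x - cbar)" for x
  have m1: "(\<lambda>\<omega>. (fst \<omega>, snd (snd \<omega>))) \<in> M \<rightarrow>\<^sub>M S \<Otimes>\<^sub>M count_space UNIV"
  proof -
    have "(\<lambda>\<omega>. (fst \<omega>, snd (snd \<omega>))) \<in> (S \<Otimes>\<^sub>M (count_space UNIV \<Otimes>\<^sub>M count_space UNIV)) \<rightarrow>\<^sub>M S \<Otimes>\<^sub>M (count_space UNIV :: bool measure)"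
      by measurable
    thus ?thesis using measurable_cong_sets[OF assms(2) refl] by blast
  qed
  have m2: "(\<lambda>\<omega>. (fst \<omega>, fst (snd \<omega>))) \<in> M \<rightarrow>\<^sub>M S \<Otimes>\<^sub>M count_space UNIV"
  proof -
    have "(\<lambda>\<omega>. (fst \<omega>, fst (snd \<omega>))) \<in> (S \<Otimes>\<^sub>M (count_space UNIV \<Otimes>\<^sub>M count_space UNIV)) \<rightarrow>\<^sub>M S \<Otimes>\<^sub>M (count_space UNIV :: bool measure)"
      by measurable
    thus ?thesis using measurable_cong_sets[OF assms(2) refl] by blast
  qed
  have pD: "prob_space (law_D S M)" unfolding law_D_def by (rule M.prob_space_distr[OF m1])
  have pDP: "prob_space (law_DP S M)" unfolding law_DP_def by (rule M.prob_space_distr[OF m2])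
  have sD: "sets (law_D S M) = sets (S \<Otimes>\<^sub>M count_space UNIV)" by (simp add: law_D_def)
  have sDP: "sets (law_DP S M) = sets (S \<Otimes>\<^sub>M count_space UNIV)" by (simp add: law_DP_def)
  have mf: "fst \<in> (S \<Otimes>\<^sub>M (count_space UNIV :: bool measure)) \<rightarrow>\<^sub>M S" by measurable
  have dD: "distr (law_D S M) S fst = ?P"
    unfolding law_D_def marg_X_def by (simp add: distr_distr[OF mf m1] o_def)
  have dDP: "distr (law_DP S M) S fst = ?P"
    unfolding law_DP_def marg_X_def by (simp add: distr_distr[OF mf m2] o_def)
  have mfM: "fst \<in> M \<rightarrow>\<^sub>M S"
    using measurable_cong_sets[OF assms(2) refl] measurable_fst by blast
  interpret P: prob_space ?P unfolding marg_X_def by (rule M.prob_space_distr[OF mfM])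
  have finP: "finite_measure ?P" by unfold_locales
  have sP: "space ?P = space S" by (simp add: marg_X_def)
  have \<eta>m: "\<eta> \<in> borel_measurable S" and \<eta>b: "\<forall>x\<in>space S. 0 \<le> \<eta> x \<and> \<eta> x \<le> 1"
    using assms(5) unfolding is_cond_prob_def by auto
  have \<eta>m': "\<eta>DP \<in> borel_measurable S" and \<eta>b': "\<forall>x\<in>space S. 0 \<le> \<eta>DP x \<and> \<eta>DP x \<le> 1"
    using assms(6) unfolding is_cond_prob_def by auto
  have sm: "s \<in> borel_measurable S" unfolding s_def using \<eta>m \<eta>m' by measurable
  have sb: "\<forall>x\<in>space S. \<bar>s x\<bar> \<le> 2 + \<bar>lam\<bar> * 2"
  proof
    fix x assume x: "x \<in> space S"
    have "\<bar>\<eta>DP x - cbar\<bar> \<le> 2" using \<eta>b' x assms(4) by auto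
    hence "\<bar>lam * (\<eta>DP x - cbar)\<bar> \<le> \<bar>lam\<bar> * 2" by (simp add: abs_mult mult_left_mono)
    moreover have "\<bar>\<eta> x - c\<bar> \<le> 2" using \<eta>b x assms(3) by auto
    ultimately show "\<bar>s x\<bar> \<le> 2 + \<bar>lam\<bar> * 2" unfolding s_def by linarith
  qed
  have ifs: "integrable ?P (\<lambda>x. f x * s x)" if "f \<in> borel_measurable S" "\<forall>x\<in>space S. 0 \<le> f x \<and> f x \<le> 1" for f
  proof (rule bint[OF finP, of _ "2 + \<bar>lam\<bar> * 2"])
    show "(\<lambda>x. f x * s x) \<in> borel_measurable ?P" using that sm by (simp add: marg_X_def)
    show "\<forall>x\<in>space ?P. \<bar>f x * s x\<bar> \<le> 2 + \<bar>lam\<bar> * 2"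
    proof
      fix x assume "x \<in> space ?P"
      hence x: "x \<in> space S" by (simp add: sP)
      have "\<bar>f x * s x\<bar> = \<bar>f x\<bar> * \<bar>s x\<bar>" by (simp add: abs_mult)
      also have "\<dots> \<le> 1 * (2 + \<bar>lam\<bar> * 2)"
        using that(2) x sb by (intro mult_mono) auto
      finally show "\<bar>f x * s x\<bar> \<le> 2 + \<bar>lam\<bar> * 2" by simp
    qed
  qed
  define K where "K = (1 - c) * (\<integral>x. \<eta> x \<partial>?P) - lam * ((1 - cbar) * (\<integral>x. \<eta>DP x \<partial>?P))"
  have Rf: "CS f (law_D S M) c - lam * CS f (law_DP S M) cbar = K - (\<integral>x. f x * s x \<partial>?P)"
    if fm: "f \<in> borel_measurable S" and fb: "\<forall>x\<in>space S. 0 \<le> f x \<and> f x \<le> 1" for f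
  proof -
    have i1: "integrable ?P (\<lambda>x. f x * (\<eta> x - c))"
      apply (rule bint[OF finP, of _ 1]) using fm \<eta>m fb \<eta>b assms(3) sP
      by (auto simp: marg_X_def abs_mult intro!: mult_le_one)
    have i2: "integrable ?P (\<lambda>x. f x * (\<eta>DP x - cbar))"
      apply (rule bint[OF finP, of _ 1]) using fm \<eta>m' fb \<eta>b' assms(4) sP
      by (auto simp: marg_X_def abs_mult intro!: mult_le_one)
    have "(\<integral>x. f x * s x \<partial>?P) = (\<integral>x. f x * (\<eta> x - c) - lam * (f x * (\<eta>DP x - cbar)) \<partial>?P)"
      unfolding s_def by (simp add: algebra_simps)
    also have "\<dots> = (\<integral>x. f x * (\<eta> x - c) \<partial>?P) - lam * (\<integral>x. f x * (\<eta>DP x - cbar) \<partial>?P)"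
      using i1 i2 by simp
    finally have e: "(\<integral>x. f x * s x \<partial>?P) = \<dots>" .
    show ?thesis
      unfolding CS_formula[OF pD sD assms(5) fm fb] CS_formula[OF pDP sDP assms(6) fm fb] dD dDP e K_def
      by (simp add: algebra_simps)
  qed
  define fs where "fs x = (if s x > 0 then 1 else (0::real))" for x
  have fsm: "fs \<in> borel_measurable S" unfolding fs_def using sm by measurable
  have fsb: "\<forall>x\<in>space S. 0 \<le> fs x \<and> fs x \<le> 1" by (simp add: fs_def)
  have pw: "f x * s x \<le> fs x * s x" if "0 \<le> f x \<and> f x \<le> 1" for f x
    using that by (auto simp: fs_def mult_le_cancel_right1 mult_nonneg_nonpos2 intro: mult_nonneg_nonpos)
  show ?thesis
  proof (rule set_eqI, rule iffI)
    fix f :: "'x \<Rightarrow> real" assume "f \<in> {f. f \<in> borel_measurable S \<and> (\<forall>x\<in>space S. 0 \<le> f x \<and> f x \<le> 1) \<and>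
            (\<forall>g. g \<in> borel_measurable S \<and> (\<forall>x\<in>space S. 0 \<le> g x \<and> g x \<le> 1) \<longrightarrow>
               CS f (law_D S M) c - lam * CS f (law_DP S M) cbar
                 \<le> CS g (law_D S M) c - lam * CS g (law_DP S M) cbar)}"
    hence fm: "f \<in> borel_measurable S" and fb: "\<forall>x\<in>space S. 0 \<le> f x \<and> f x \<le> 1"
      and opt: "CS f (law_D S M) c - lam * CS f (law_DP S M) cbar
                 \<le> CS fs (law_D S M) c - lam * CS fs (law_DP S M) cbar" using fsm fsb by auto
    have le: "(\<integral>x. fs x * s x \<partial>?P) \<le> (\<integral>x. f x * s x \<partial>?P)"
      using opt unfolding Rf[OF fm fb] Rf[OF fsm fsb] by simp
    have ge: "(\<integral>x. f x * s x \<partial>?P) \<le> (\<integral>x. fs x * s x \<partial>?P)"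
      apply (rule integral_mono[OF ifs[OF fm fb] ifs[OF fsm fsb]]) using pw fb sP by auto
    have "(\<integral>x. fs x * s x - f x * s x \<partial>?P) = 0"
      using le ge ifs[OF fm fb] ifs[OF fsm fsb] by simp
    moreover have "integrable ?P (\<lambda>x. fs x * s x - f x * s x)"
      using ifs[OF fm fb] ifs[OF fsm fsb] by simp
    moreover have "AE x in ?P. 0 \<le> fs x * s x - f x * s x" using pw fb sP by auto
    ultimately have ae: "AE x in ?P. fs x * s x - f x * s x = 0"
      using integral_nonneg_eq_0_iff_AE by blast
    have "AE x in ?P. s x \<noteq> 0 \<longrightarrow> f x = (if s x > 0 then 1 else 0)"
      using ae by eventually_elim (auto simp: fs_def)
    thus "f \<in> {f. f \<in> borel_measurable S \<and> (\<forall>x\<in>space S. 0 \<le> f x \<and> f x \<le> 1) \<and>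
            (AE x in marg_X S M.
               \<eta> x - c - lam * (\<eta>DP x - cbar) \<noteq> 0 \<longrightarrow>
               f x = (if \<eta> x - c - lam * (\<eta>DP x - cbar) > 0 then 1 else 0))}"
      using fm fb unfolding s_def by simp
  next
    fix f :: "'x \<Rightarrow> real" assume "f \<in> {f. f \<in> borel_measurable S \<and> (\<forall>x\<in>space S. 0 \<le> f x \<and> f x \<le> 1) \<and>
            (AE x in marg_X S M.
               \<eta> x - c - lam * (\<eta>DP x - cbar) \<noteq> 0 \<longrightarrow>
               f x = (if \<eta> x - c - lam * (\<eta>DP x - cbar) > 0 then 1 else 0))}"
    hence fm: "f \<in> borel_measurable S" and fb: "\<forall>x\<in>space S. 0 \<le> f x \<and> f x \<le> 1"
      and ae: "AE x in ?P. s x \<noteq> 0 \<longrightarrow> f x = (if s x > 0 then 1 else 0)"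
      unfolding s_def by auto
    have "CS f (law_D S M) c - lam * CS f (law_DP S M) cbar
                 \<le> CS g (law_D S M) c - lam * CS g (law_DP S M) cbar"
      if gm: "g \<in> borel_measurable S" and gb: "\<forall>x\<in>space S. 0 \<le> g x \<and> g x \<le> 1" for g
    proof -
      have "(\<integral>x. g x * s x \<partial>?P) \<le> (\<integral>x. f x * s x \<partial>?P)"
      proof (rule integral_mono_AE[OF ifs[OF gm gb] ifs[OF fm fb]])
        have "AE x in ?P. x \<in> space S" using AE_space[of ?P] unfolding sP .
        thus "AE x in ?P. g x * s x \<le> f x * s x"
          using ae
        proof eventually_elim
          case (elim x)
          hence "f x * s x = fs x * s x" by (cases "s x = 0") (auto simp: fs_def)
          thus ?case using pw[of g x] gb elim by auto
        qed
      qed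
      thus ?thesis unfolding Rf[OF fm fb] Rf[OF gm gb] by simp
    qed
    thus "f \<in> {f. f \<in> borel_measurable S \<and> (\<forall>x\<in>space S. 0 \<le> f x \<and> f x \<le> 1) \<and>
            (\<forall>g. g \<in> borel_measurable S \<and> (\<forall>x\<in>space S. 0 \<le> g x \<and> g x \<le> 1) \<longrightarrow>
               CS f (law_D S M) c - lam * CS f (law_DP S M) cbar
                 \<le> CS g (law_D S M) c - lam * CS g (law_DP S M) cbar)}"
      using fm fb by auto
  qed
qed

end
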